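(* Let $p\in\{2,3\}$, let $\mathbf{k}$ be a field of characteristic $p$, and let $K=\mathbf{k}[y_1,y_2,y_3]/(y_1^p,y_2^p,y_3^p)$. Let $\mathcal{L}=Lie_K(x_1,x_2,x_3\mid y_3x_3=y_2x_2+y_1x_1)$. Then $\mathcal{L}$ is not embeddable into its universal enveloping algebra $U_K(\mathcal{L})=K\langle x_1,x_2,x_3\mid y_3x_3=y_2x_2+y_1x_1\rangle$; i.e., the canonical map $\mathcal{L}\to U_K(\mathcal{L})$ is not injective.
   Context: $Lie_K(X\mid\cdot)$ denotes the free Lie $K$-algebra on $X$ modulo the ideal generated by the given relation; $U_K(\mathcal L)$ is the corresponding associative $K$-algebra with identity, and the canonical map is induced by $x_i\mapsto x_i$. *)

theory Defs
  imports Main "HOL-Library.Function_Algebras"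
begin

text \<open>
  K = k[y1,y2,y3]/(y1^p,y2^p,y3^p) and the free associative
  K-algebra K<x1,x2,x3> = K \<otimes>_k k<x1,x2,x3>.  A basis monomial is a pair
  ((a,b,c), w) standing for y1^a y2^b y3^c w, where w is a word in the
  letters 1,2,3 (letter i stands for x_i) and a,b,c < p.  An element is a
  finitely supported k-valued function on valid monomials.
\<close>

type_synonym mono = "(nat \<times> nat \<times> nat) \<times> nat list"
type_synonym 'k elt = "mono \<Rightarrow> 'k"

definition valid_mono :: "nat \<Rightarrow> mono \<Rightarrow> bool" where
  "valid_mono p m = (case m of ((a, b, c), w) \<Rightarrow>
      a < p \<and> b < p \<and> c < p \<and> set w \<subseteq> {1, 2, 3})"

definition supp :: "'k::zero elt \<Rightarrow> mono set" where
  "supp f = {m. f m \<noteq> 0}"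

definition FA :: "nat \<Rightarrow> ('k::zero) elt set" where
  "FA p = {f. finite (supp f) \<and> (\<forall>m. f m \<noteq> 0 \<longrightarrow> valid_mono p m)}"

text \<open>The coefficient ring K, embedded as the elements supported on the empty word.\<close>
definition Kpart :: "nat \<Rightarrow> ('k::zero) elt set" where
  "Kpart p = {f \<in> FA p. \<forall>e w. f (e, w) \<noteq> 0 \<longrightarrow> w = []}"

fun mono_mult :: "mono \<Rightarrow> mono \<Rightarrow> mono" where
  "mono_mult ((a1, b1, c1), w1) ((a2, b2, c2), w2) =
     ((a1 + a2, b1 + b2, c1 + c2), w1 @ w2)"

text \<open>Multiplication in K<x1,x2,x3> (monomials with some y-exponent \<ge> p vanish).\<close>
definition emult :: "nat \<Rightarrow> 'k::comm_ring_1 elt \<Rightarrow> 'k elt \<Rightarrow> 'k elt" where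
  "emult p f g = (\<lambda>m. if valid_mono p m then
      (\<Sum>(m1, m2) \<in> {(m1, m2). m1 \<in> supp f \<and> m2 \<in> supp g \<and> mono_mult m1 m2 = m}.
          f m1 * g m2)
    else 0)"

definition ecomm :: "nat \<Rightarrow> 'k::comm_ring_1 elt \<Rightarrow> 'k elt \<Rightarrow> 'k elt" where
  "ecomm p f g = emult p f g - emult p g f"

definition basis_el :: "mono \<Rightarrow> 'k::{zero,one} elt" where
  "basis_el m = (\<lambda>m'. if m' = m then 1 else 0)"

definition xg :: "nat \<Rightarrow> 'k::{zero,one} elt" where
  "xg i = basis_el ((0, 0, 0), [i])"

definition rel :: "'k::comm_ring_1 elt" where
  "rel = basis_el ((0, 0, 1), [3]) - basis_el ((0, 1, 0), [2]) - basis_el ((1, 0, 0), [1])"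

inductive_set FreeLie :: "nat \<Rightarrow> 'k::comm_ring_1 elt set" for p where
  gen: "i \<in> {1, 2, 3} \<Longrightarrow> xg i \<in> FreeLie p"
| zero: "0 \<in> FreeLie p"
| add: "f \<in> FreeLie p \<Longrightarrow> g \<in> FreeLie p \<Longrightarrow> f + g \<in> FreeLie p"
| smult: "c \<in> Kpart p \<Longrightarrow> f \<in> FreeLie p \<Longrightarrow> emult p c f \<in> FreeLie p"
| bracket: "f \<in> FreeLie p \<Longrightarrow> g \<in> FreeLie p \<Longrightarrow> ecomm p f g \<in> FreeLie p"

inductive_set LieIdeal :: "nat \<Rightarrow> 'k::comm_ring_1 elt set" for p where
  gen: "rel \<in> LieIdeal p"
| zero: "0 \<in> LieIdeal p"
| add: "f \<in> LieIdeal p \<Longrightarrow> g \<in> LieIdeal p \<Longrightarrow> f + g \<in> LieIdeal p"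
| smult: "c \<in> Kpart p \<Longrightarrow> f \<in> LieIdeal p \<Longrightarrow> emult p c f \<in> LieIdeal p"
| bracket: "f \<in> LieIdeal p \<Longrightarrow> g \<in> FreeLie p \<Longrightarrow> ecomm p f g \<in> LieIdeal p"

text \<open>The two-sided ideal of K<x1,x2,x3> generated by the relation;
  U_K(L) = K<x1,x2,x3> / AssocIdeal.\<close>
inductive_set AssocIdeal :: "nat \<Rightarrow> 'k::comm_ring_1 elt set" for p where
  gen: "rel \<in> AssocIdeal p"
| zero: "0 \<in> AssocIdeal p"
| add: "f \<in> AssocIdeal p \<Longrightarrow> g \<in> AssocIdeal p \<Longrightarrow> f + g \<in> AssocIdeal p"
| lmult: "a \<in> FA p \<Longrightarrow> f \<in> AssocIdeal p \<Longrightarrow> emult p a f \<in> AssocIdeal p"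
| rmult: "a \<in> FA p \<Longrightarrow> f \<in> AssocIdeal p \<Longrightarrow> emult p f a \<in> AssocIdeal p"

text \<open>The canonical map L = FreeLie/LieIdeal \<rightarrow> U_K(L) = FA/AssocIdeal is
  induced by the inclusion FreeLie \<subseteq> FA; it is injective iff every
  element of FreeLie lying in AssocIdeal lies in LieIdeal.\<close>
definition canonical_map_injective :: "nat \<Rightarrow> 'k::comm_ring_1 itself \<Rightarrow> bool" where
  "canonical_map_injective p _ =
     (\<forall>f \<in> (FreeLie p :: 'k elt set). f \<in> AssocIdeal p \<longrightarrow> f \<in> LieIdeal p)"

end

theory Submission
  imports Defs
begin


definition bv :: "nat \<Rightarrow> mono \<Rightarrow> 'k::comm_ring_1 elt" where
  "bv p m = (if valid_mono p m then basis_el m else 0)"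

definition sc :: "'k \<Rightarrow> 'k::comm_ring_1 elt \<Rightarrow> 'k elt" where
  "sc c f = (\<lambda>m. c * f m)"

definition Ln :: "nat \<Rightarrow> 'k::comm_ring_1 elt \<Rightarrow> 'k elt" where
  "Ln n f = (\<lambda>m. if length (snd m) = n then f m else 0)"

lemma supp_add: "supp (f + g) \<subseteq> supp f \<union> supp (g::'k::comm_ring_1 elt)"
  by (auto simp: supp_def)
lemma supp_diff: "supp (f - g) \<subseteq> supp f \<union> supp (g::'k::comm_ring_1 elt)"
  by (auto simp: supp_def)
lemma supp_uminus: "supp (- f) = supp (f::'k::comm_ring_1 elt)"
  by (auto simp: supp_def)
lemma supp_zero[simp]: "supp (0::'k::comm_ring_1 elt) = {}"
  by (auto simp: supp_def)

lemma FA_finite: "f \<in> FA p \<Longrightarrow> finite (supp f)"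
  by (simp add: FA_def)
lemma FA_valid: "f \<in> FA p \<Longrightarrow> f m \<noteq> 0 \<Longrightarrow> valid_mono p m"
  unfolding FA_def by blast
lemma FAI: "finite (supp f) \<Longrightarrow> (\<And>m. f m \<noteq> 0 \<Longrightarrow> valid_mono p m) \<Longrightarrow> f \<in> FA p"
  unfolding FA_def by blast

lemma FA_zero[simp]: "(0::'k::comm_ring_1 elt) \<in> FA p"
  by (rule FAI) auto
lemma FA_add[simp]: "f \<in> FA p \<Longrightarrow> g \<in> FA p \<Longrightarrow> f + (g::'k::comm_ring_1 elt) \<in> FA p"
  apply (rule FAI)
   apply (meson FA_finite finite_Un finite_subset supp_add)
  by (metis FA_valid add.right_neutral plus_fun_apply)
lemma FA_uminus[simp]: "f \<in> FA p \<Longrightarrow> - (f::'k::comm_ring_1 elt) \<in> FA p"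
  apply (rule FAI)
   apply (simp add: FA_finite supp_uminus)
  by (metis FA_valid neg_equal_0_iff_equal uminus_apply)
lemma FA_diff[simp]: "f \<in> FA p \<Longrightarrow> g \<in> FA p \<Longrightarrow> f - (g::'k::comm_ring_1 elt) \<in> FA p"
  using FA_add[of f p "-g"] by simp
lemma FA_sc[simp]: "f \<in> FA p \<Longrightarrow> sc c (f::'k::comm_ring_1 elt) \<in> FA p"
  apply (rule FAI)
   apply (rule finite_subset[of _ "supp f"]) apply (auto simp: supp_def sc_def FA_finite)[1]
   apply (simp add: FA_finite)
  by (metis FA_valid mult_zero_right sc_def)
lemma FA_bv[simp]: "bv p m \<in> FA p"
  apply (rule FAI)
   apply (rule finite_subset[of _ "{m}"]) apply (auto simp: supp_def bv_def basis_el_def)[1]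
   apply simp
  by (metis basis_el_def bv_def zero_fun_apply)
lemma FA_Ln[simp]: "f \<in> FA p \<Longrightarrow> Ln n f \<in> FA p"
  apply (rule FAI)
   apply (rule finite_subset[of _ "supp f"]) apply (auto simp: supp_def Ln_def FA_finite)[1]
   apply (simp add: FA_finite)
  by (metis FA_valid Ln_def)

lemma emult_superset:
  fixes f g :: "'k::comm_ring_1 elt"
  assumes "finite A" "finite B" "supp f \<subseteq> A" "supp g \<subseteq> B"
  shows "emult p f g m = (if valid_mono p m then
      (\<Sum>x \<in> {x. fst x \<in> A \<and> snd x \<in> B \<and> mono_mult (fst x) (snd x) = m}. f (fst x) * g (snd x)) else 0)"
proof (cases "valid_mono p m")
  case True
  have fin: "finite {x. fst x \<in> A \<and> snd x \<in> B \<and> mono_mult (fst x) (snd x) = m}"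
    by (rule finite_subset[of _ "A \<times> B"]) (use assms in auto)
  have eqs: "{(m1, m2). m1 \<in> supp f \<and> m2 \<in> supp g \<and> mono_mult m1 m2 = m}
     = {x. fst x \<in> supp f \<and> snd x \<in> supp g \<and> mono_mult (fst x) (snd x) = m}" by auto
  have "(\<Sum>x \<in> {x. fst x \<in> supp f \<and> snd x \<in> supp g \<and> mono_mult (fst x) (snd x) = m}. f (fst x) * g (snd x))
      = (\<Sum>x \<in> {x. fst x \<in> A \<and> snd x \<in> B \<and> mono_mult (fst x) (snd x) = m}. f (fst x) * g (snd x))"
    by (rule sum.mono_neutral_left[OF fin]) (use assms in \<open>auto simp: supp_def\<close>)
  then show ?thesis using True by (simp add: emult_def eqs split_def)
qed (simp add: emult_def)

lemma emult_add_left: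
  fixes f g h :: "'k::comm_ring_1 elt"
  assumes "f \<in> FA p" "g \<in> FA p" "h \<in> FA p"
  shows "emult p (f + g) h = emult p f h + emult p g h"
proof
  fix m
  let ?A = "supp f \<union> supp g" and ?B = "supp h"
  have fA: "finite ?A" "finite ?B" using assms FA_finite by auto
  note E = emult_superset[OF fA _ order_refl, of _ p m]
  have s: "supp f \<subseteq> ?A" "supp g \<subseteq> ?A" "supp (f+g) \<subseteq> ?A" using supp_add[of f g] by auto
  show "emult p (f + g) h m = (emult p f h + emult p g h) m"
    unfolding plus_fun_apply E[OF s(1)] E[OF s(2)] E[OF s(3)]
    by (simp add: distrib_right sum.distrib)
qed

lemma emult_add_right:
  fixes f g h :: "'k::comm_ring_1 elt"
  assumes "f \<in> FA p" "g \<in> FA p" "h \<in> FA p"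
  shows "emult p h (f + g) = emult p h f + emult p h g"
proof
  fix m
  let ?B = "supp f \<union> supp g" and ?A = "supp h"
  have fA: "finite ?A" "finite ?B" using assms FA_finite by auto
  note E = emult_superset[OF fA order_refl, of _ p m]
  have s: "supp f \<subseteq> ?B" "supp g \<subseteq> ?B" "supp (f+g) \<subseteq> ?B" using supp_add[of f g] by auto
  show "emult p h (f + g) m = (emult p h f + emult p h g) m"
    unfolding plus_fun_apply E[OF s(1)] E[OF s(2)] E[OF s(3)]
    by (simp add: distrib_left sum.distrib)
qed

lemma emult_sc_left:
  fixes f h :: "'k::comm_ring_1 elt"
  assumes "f \<in> FA p" "h \<in> FA p"
  shows "emult p (sc c f) h = sc c (emult p f h)"
proof
  fix m
  let ?A = "supp f" and ?B = "supp h"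
  have fA: "finite ?A" "finite ?B" using assms FA_finite by auto
  note E = emult_superset[OF fA _ order_refl, of _ p m]
  have s: "supp (sc c f) \<subseteq> supp f" by (auto simp: supp_def sc_def)
  show "emult p (sc c f) h m = sc c (emult p f h) m"
    apply (subst E[OF s])
    apply (subst (2) sc_def)
    apply (subst emult_superset[OF fA order_refl order_refl, of p m])
    by (simp add: sc_def sum_distrib_left mult.assoc)
qed

lemma emult_sc_right:
  fixes f h :: "'k::comm_ring_1 elt"
  assumes "f \<in> FA p" "h \<in> FA p"
  shows "emult p h (sc c f) = sc c (emult p h f)"
proof
  fix m
  let ?B = "supp f" and ?A = "supp h"
  have fA: "finite ?A" "finite ?B" using assms FA_finite by auto
  note E = emult_superset[OF fA order_refl, of _ p m]
  have s: "supp (sc c f) \<subseteq> supp f" by (auto simp: supp_def sc_def)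
  show "emult p h (sc c f) m = sc c (emult p h f) m"
    apply (subst E[OF s])
    apply (subst (2) sc_def)
    apply (subst emult_superset[OF fA order_refl order_refl, of p m])
    by (simp add: sc_def sum_distrib_left mult.left_commute)
qed

lemma emult_zero_left[simp]: "emult p 0 (g::'k::comm_ring_1 elt) = 0"
  by (rule ext) (simp add: emult_def)
lemma emult_zero_right[simp]: "emult p (g::'k::comm_ring_1 elt) 0 = 0"
  by (rule ext) (simp add: emult_def)

lemma sc_minus1: "sc (-1) f = - (f::'k::comm_ring_1 elt)"
  by (rule ext) (simp add: sc_def)

lemma emult_uminus_left:
  "f \<in> FA p \<Longrightarrow> h \<in> FA p \<Longrightarrow> emult p (- f) h = - emult p f (h::'k::comm_ring_1 elt)"
  using emult_sc_left[of f p h "-1"] by (simp add: sc_minus1)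
lemma emult_uminus_right:
  "f \<in> FA p \<Longrightarrow> h \<in> FA p \<Longrightarrow> emult p h (- f) = - emult p h (f::'k::comm_ring_1 elt)"
  using emult_sc_right[of f p h "-1"] by (simp add: sc_minus1)
lemma emult_diff_left:
  "f \<in> FA p \<Longrightarrow> g \<in> FA p \<Longrightarrow> h \<in> FA p \<Longrightarrow> emult p (f - g) h = emult p f h - emult p g (h::'k::comm_ring_1 elt)"
  using emult_add_left[of f p "-g" h] by (simp add: emult_uminus_left)
lemma emult_diff_right:
  "f \<in> FA p \<Longrightarrow> g \<in> FA p \<Longrightarrow> h \<in> FA p \<Longrightarrow> emult p h (f - g) = emult p h f - emult p h (g::'k::comm_ring_1 elt)"
  using emult_add_right[of f p "-g" h] by (simp add: emult_uminus_right)

lemma FA_emult[simp]: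
  fixes f g :: "'k::comm_ring_1 elt"
  assumes "f \<in> FA p" "g \<in> FA p"
  shows "emult p f g \<in> FA p"
proof -
  have fin: "finite (supp f \<times> supp g)" using assms FA_finite by auto
  have "supp (emult p f g) \<subseteq> (\<lambda>(m1,m2). mono_mult m1 m2) ` (supp f \<times> supp g)"
  proof
    fix m assume "m \<in> supp (emult p f g)"
    then have ne: "emult p f g m \<noteq> 0" by (simp add: supp_def)
    then have "(\<Sum>(m1, m2) \<in> {(m1, m2). m1 \<in> supp f \<and> m2 \<in> supp g \<and> mono_mult m1 m2 = m}.
          f m1 * g m2) \<noteq> 0"
      unfolding emult_def by (metis (no_types, lifting))
    then obtain x where "x \<in> {(m1, m2). m1 \<in> supp f \<and> m2 \<in> supp g \<and> mono_mult m1 m2 = m}"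
      using sum.not_neutral_contains_not_neutral by blast
    then obtain m1 m2 where "m1 \<in> supp f" "m2 \<in> supp g" "mono_mult m1 m2 = m" by blast
    then show "m \<in> (\<lambda>(m1,m2). mono_mult m1 m2) ` (supp f \<times> supp g)"
      by (intro image_eqI[of _ _ "(m1,m2)"]) simp_all
  qed
  then have "finite (supp (emult p f g))" using fin by (meson finite_imageI finite_subset)
  moreover have "\<And>m. emult p f g m \<noteq> 0 \<Longrightarrow> valid_mono p m" unfolding emult_def by metis
  ultimately show ?thesis by (rule FAI)
qed

lemma FA_ecomm[simp]: "f \<in> FA p \<Longrightarrow> g \<in> FA p \<Longrightarrow> ecomm p f (g::'k::comm_ring_1 elt) \<in> FA p"
  by (simp add: ecomm_def)

lemma valid_mono_mult:
  "valid_mono p (mono_mult m1 m2) \<Longrightarrow> valid_mono p m1 \<and> valid_mono p m2"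
  by (cases m1; cases m2) (auto simp: valid_mono_def)

lemma emult_bv:
  "emult p (bv p m1) (bv p m2 :: 'k::comm_ring_1 elt) = bv p (mono_mult m1 m2)"
proof
  fix m
  have A: "finite {m1}" "finite {m2}" by auto
  have s1: "supp (bv p m1 :: 'k elt) \<subseteq> {m1}" "supp (bv p m2 :: 'k elt) \<subseteq> {m2}"
    by (auto simp: supp_def bv_def basis_el_def)
  have set: "{x. fst x \<in> {m1} \<and> snd x \<in> {m2} \<and> mono_mult (fst x) (snd x) = m} =
     (if mono_mult m1 m2 = m then {(m1,m2)} else {})" by auto
  show "emult p (bv p m1) (bv p m2 :: 'k elt) m = bv p (mono_mult m1 m2) m"
    unfolding emult_superset[OF A s1, of p m] set using valid_mono_mult[of p m1 m2]
    by (auto simp: bv_def basis_el_def)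
qed




lemma fsum_apply: "(sum F S) x = (\<Sum>m\<in>S. F m x :: 'a::comm_monoid_add)"
  by (induction S rule: infinite_finite_induct) auto

lemma Ln_add[simp]: "Ln n (f + g) = Ln n f + Ln n (g::'k::comm_ring_1 elt)"
  by (rule ext) (simp add: Ln_def)
lemma Ln_diff[simp]: "Ln n (f - g) = Ln n f - Ln n (g::'k::comm_ring_1 elt)"
  by (rule ext) (simp add: Ln_def)
lemma Ln_uminus[simp]: "Ln n (- f) = - Ln n (f::'k::comm_ring_1 elt)"
  by (rule ext) (simp add: Ln_def)
lemma Ln_zero[simp]: "Ln n (0::'k::comm_ring_1 elt) = 0"
  by (rule ext) (simp add: Ln_def)
lemma Ln_sc[simp]: "Ln n (sc c f) = sc c (Ln n (f::'k::comm_ring_1 elt))"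
  by (rule ext) (simp add: Ln_def sc_def)
lemma Ln_bv[simp]: "Ln n (bv p (e, w) :: 'k::comm_ring_1 elt) = (if length w = n then bv p (e, w) else 0)"
  by (rule ext) (auto simp: Ln_def bv_def basis_el_def)

lemma len_mono_mult: "length (snd (mono_mult m1 m2)) = length (snd m1) + length (snd m2)"
  by (cases m1; cases m2) auto

lemma sum_split_len:
  "(\<Sum>i\<le>n. if (a::nat) = i \<and> b = n - i then c else (0::'a::comm_monoid_add)) = (if a + b = n then c else 0)"
proof (cases "a + b = n")
  case True
  then have "\<And>i. (a = i \<and> b = n - i) = (i = a)" by force
  then show ?thesis using True by (simp add: sum.delta')
next
  case False
  then have "\<And>i. i \<le> n \<Longrightarrow> \<not> (a = i \<and> b = n - i)" by auto
  then have "(\<Sum>i\<le>n. if a = i \<and> b = n - i then c else (0::'a)) = (\<Sum>i\<le>n. 0)"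
    by (intro sum.cong) auto
  then show ?thesis using False by simp
qed

lemma Ln_emult:
  fixes f g :: "'k::comm_ring_1 elt"
  assumes "f \<in> FA p" "g \<in> FA p"
  shows "Ln n (emult p f g) = (\<Sum>i\<le>n. emult p (Ln i f) (Ln (n - i) g))"
proof
  fix m
  let ?A = "supp f" and ?B = "supp g"
  have fA: "finite ?A" "finite ?B" using assms FA_finite by auto
  have sL: "\<And>i h. supp (Ln i h) \<subseteq> supp (h::'k elt)" by (auto simp: supp_def Ln_def)
  let ?P = "{x. fst x \<in> ?A \<and> snd x \<in> ?B \<and> mono_mult (fst x) (snd x) = m}"
  have "(\<Sum>i\<le>n. emult p (Ln i f) (Ln (n - i) g)) m = (\<Sum>i\<le>n. emult p (Ln i f) (Ln (n - i) g) m)"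
    by (rule fsum_apply)
  also have "\<dots> = (\<Sum>i\<le>n. if valid_mono p m then (\<Sum>x\<in>?P. Ln i f (fst x) * Ln (n - i) g (snd x)) else 0)"
    by (rule sum.cong[OF refl]) (rule emult_superset[OF fA sL sL])
  also have "\<dots> = (if valid_mono p m then (\<Sum>x\<in>?P. \<Sum>i\<le>n. Ln i f (fst x) * Ln (n - i) g (snd x)) else 0)"
    by (simp add: sum.swap[of _ "{..n}"])
  also have "\<dots> = (if valid_mono p m then (\<Sum>x\<in>?P. if length (snd m) = n then f (fst x) * g (snd x) else 0) else 0)"
  proof (cases "valid_mono p m")
    case True
    have "\<And>x. x \<in> ?P \<Longrightarrow> (\<Sum>i\<le>n. Ln i f (fst x) * Ln (n - i) g (snd x)) =
       (if length (snd m) = n then f (fst x) * g (snd x) else 0)"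
    proof -
      fix x assume x: "x \<in> ?P"
      then have lm: "length (snd m) = length (snd (fst x)) + length (snd (snd x))"
        using len_mono_mult[of "fst x" "snd x"] by auto
      have "(\<Sum>i\<le>n. Ln i f (fst x) * Ln (n - i) g (snd x)) =
         (\<Sum>i\<le>n. if length (snd (fst x)) = i \<and> length (snd (snd x)) = n - i then f (fst x) * g (snd x) else 0)"
        by (rule sum.cong) (auto simp: Ln_def)
      also have "\<dots> = (if length (snd m) = n then f (fst x) * g (snd x) else 0)"
        by (simp only: sum_split_len lm)
      finally show "?thesis x" .
    qed
    then show ?thesis using True by (simp only: if_True) (rule sum.cong[OF refl], blast)
  qed simp
  also have "\<dots> = Ln n (emult p f g) m"
    by (simp add: Ln_def emult_superset[OF fA order_refl order_refl])
  finally show "Ln n (emult p f g) m = (\<Sum>i\<le>n. emult p (Ln i f) (Ln (n - i) g)) m" by simp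
qed

definition kb :: "nat \<Rightarrow> nat \<times> nat \<times> nat \<Rightarrow> 'k::comm_ring_1 elt" where
  "kb p e = bv p (e, [])"

lemma emult_kb0:
  fixes f :: "'k::comm_ring_1 elt"
  assumes "f \<in> FA p" "p \<ge> 1"
  shows "emult p (kb p (0,0,0)) f = f"
proof
  fix m
  have fA: "finite {((0,0,0),[])}" "finite (supp f)" using assms FA_finite by auto
  have s: "supp (kb p (0,0,0) :: 'k elt) \<subseteq> {((0,0,0),[])}" by (auto simp: supp_def kb_def bv_def basis_el_def)
  have v: "valid_mono p ((0,0,0),[])" using assms by (simp add: valid_mono_def)
  have P: "{x. fst x \<in> {((0,0,0),[])} \<and> snd x \<in> supp f \<and> mono_mult (fst x) (snd x) = m}
        = (if m \<in> supp f then {(((0,0,0),[]), m)} else {})"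
    by (cases m) auto
  show "emult p (kb p (0,0,0)) f m = f m"
    unfolding emult_superset[OF fA s order_refl] P
    using v FA_valid[OF assms(1), of m]
    by (auto simp: kb_def bv_def basis_el_def supp_def)
qed

inductive_set kspan :: "'k::comm_ring_1 elt set \<Rightarrow> 'k elt set" for S where
  kzero: "0 \<in> kspan S"
| kgen: "s \<in> S \<Longrightarrow> s \<in> kspan S"
| kadd: "x \<in> kspan S \<Longrightarrow> y \<in> kspan S \<Longrightarrow> x + y \<in> kspan S"
| ksc: "x \<in> kspan S \<Longrightarrow> sc c x \<in> kspan S"

lemma zero_lam: "(\<lambda>a. 0) = (0::'k::zero elt)" by (simp add: zero_fun_def)
lemma plus_lam: "(\<lambda>a. f a + g a) = (f + g::'k::comm_ring_1 elt)" by (simp add: plus_fun_def)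

lemma kspan_FA: "x \<in> kspan S \<Longrightarrow> S \<subseteq> FA p \<Longrightarrow> x \<in> FA p"
  by (induction rule: kspan.induct) (auto simp: zero_lam)

lemma kspan_uminus: "x \<in> kspan S \<Longrightarrow> - x \<in> kspan S"
  using kspan.ksc[of x S "-1"] by (simp add: sc_minus1)
lemma kspan_diff: "x \<in> kspan S \<Longrightarrow> y \<in> kspan S \<Longrightarrow> x - y \<in> kspan S"
  using kspan.kadd[OF _ kspan_uminus[of y S], of x] by simp

lemma kspan_mono: "x \<in> kspan S \<Longrightarrow> S \<subseteq> T \<Longrightarrow> x \<in> kspan T"
  by (induction rule: kspan.induct) (auto intro: kspan.intros)

lemma kspan_sum: "finite A \<Longrightarrow> (\<And>a. a \<in> A \<Longrightarrow> F a \<in> kspan S) \<Longrightarrow> sum F A \<in> kspan S"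
  by (induction A rule: finite_induct) (auto intro: kspan.intros)

lemma kspan_emult:
  fixes S T U :: "'k::comm_ring_1 elt set"
  assumes "S \<subseteq> FA p" "T \<subseteq> FA p"
    and st: "\<And>s t. s \<in> S \<Longrightarrow> t \<in> T \<Longrightarrow> emult p s t \<in> kspan U"
    and x: "x \<in> kspan S" and y: "y \<in> kspan T"
  shows "emult p x y \<in> kspan U"
  using x
proof (induction rule: kspan.induct)
  case kzero then show ?case by (simp add: kspan.kzero zero_lam)
next
  case (kgen s)
  from y show ?case
  proof (induction rule: kspan.induct)
    case kzero then show ?case by (simp add: kspan.kzero zero_lam)
  next
    case (kgen t) then show ?case using st \<open>s \<in> S\<close> by blast
  next
    case (kadd y1 y2)
    have "y1 \<in> FA p" "y2 \<in> FA p" "s \<in> FA p" using kadd.hyps assms kspan_FA[of _ _ p] \<open>s \<in> S\<close> by auto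
    then show ?case using kadd.IH by (simp add: emult_add_right kspan.kadd plus_lam)
  next
    case (ksc y1 c)
    have "y1 \<in> FA p" "s \<in> FA p" using ksc.hyps assms kspan_FA[of _ _ p] \<open>s \<in> S\<close> by auto
    then show ?case using ksc.IH by (simp add: emult_sc_right kspan.ksc)
  qed
next
  case (kadd x1 x2)
  have "x1 \<in> FA p" "x2 \<in> FA p" "y \<in> FA p" using kadd.hyps assms kspan_FA[of _ _ p] y by auto
  then show ?case using kadd.IH by (simp add: emult_add_left kspan.kadd plus_lam)
next
  case (ksc x1 c)
  have "x1 \<in> FA p" "y \<in> FA p" using ksc.hyps assms kspan_FA[of _ _ p] y by auto
  then show ?case using ksc.IH by (simp add: emult_sc_left kspan.ksc)
qed

lemma ecomm_add_left:
  "f \<in> FA p \<Longrightarrow> g \<in> FA p \<Longrightarrow> h \<in> FA p \<Longrightarrow> ecomm p (f + g) h = ecomm p f h + ecomm p g (h::'k::comm_ring_1 elt)"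
  by (simp add: ecomm_def emult_add_left emult_add_right)
lemma ecomm_add_right:
  "f \<in> FA p \<Longrightarrow> g \<in> FA p \<Longrightarrow> h \<in> FA p \<Longrightarrow> ecomm p h (f + g) = ecomm p h f + ecomm p h (g::'k::comm_ring_1 elt)"
  by (simp add: ecomm_def emult_add_left emult_add_right)
lemma sc_diff: "sc c (f - g) = sc c f - sc c (g::'k::comm_ring_1 elt)"
  by (rule ext) (simp add: sc_def algebra_simps)
lemma ecomm_sc_left:
  "f \<in> FA p \<Longrightarrow> h \<in> FA p \<Longrightarrow> ecomm p (sc c f) h = sc c (ecomm p f (h::'k::comm_ring_1 elt))"
  by (simp add: ecomm_def emult_sc_left emult_sc_right sc_diff)
lemma ecomm_sc_right:
  "f \<in> FA p \<Longrightarrow> h \<in> FA p \<Longrightarrow> ecomm p h (sc c f) = sc c (ecomm p h (f::'k::comm_ring_1 elt))"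
  by (simp add: ecomm_def emult_sc_left emult_sc_right sc_diff)
lemma ecomm_zero_left[simp]: "ecomm p 0 (g::'k::comm_ring_1 elt) = 0"
  by (simp add: ecomm_def)
lemma ecomm_zero_right[simp]: "ecomm p g (0::'k::comm_ring_1 elt) = 0"
  by (simp add: ecomm_def)

lemma kspan_ecomm:
  fixes S T U :: "'k::comm_ring_1 elt set"
  assumes "S \<subseteq> FA p" "T \<subseteq> FA p"
    and st: "\<And>s t. s \<in> S \<Longrightarrow> t \<in> T \<Longrightarrow> ecomm p s t \<in> kspan U"
    and x: "x \<in> kspan S" and y: "y \<in> kspan T"
  shows "ecomm p x y \<in> kspan U"
  using x
proof (induction rule: kspan.induct)
  case kzero then show ?case by (simp add: kspan.kzero zero_lam)
next
  case (kgen s)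
  from y show ?case
  proof (induction rule: kspan.induct)
    case kzero then show ?case by (simp add: kspan.kzero zero_lam)
  next
    case (kgen t) then show ?case using st \<open>s \<in> S\<close> by blast
  next
    case (kadd y1 y2)
    have "y1 \<in> FA p" "y2 \<in> FA p" "s \<in> FA p" using kadd.hyps assms kspan_FA[of _ _ p] \<open>s \<in> S\<close> by auto
    then show ?case using kadd.IH by (simp add: ecomm_add_right kspan.kadd plus_lam)
  next
    case (ksc y1 c)
    have "y1 \<in> FA p" "s \<in> FA p" using ksc.hyps assms kspan_FA[of _ _ p] \<open>s \<in> S\<close> by auto
    then show ?case using ksc.IH by (simp add: ecomm_sc_right kspan.ksc)
  qed
next
  case (kadd x1 x2)
  have "x1 \<in> FA p" "x2 \<in> FA p" "y \<in> FA p" using kadd.hyps assms kspan_FA[of _ _ p] y by auto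
  then show ?case using kadd.IH by (simp add: ecomm_add_left kspan.kadd plus_lam)
next
  case (ksc x1 c)
  have "x1 \<in> FA p" "y \<in> FA p" using ksc.hyps assms kspan_FA[of _ _ p] y by auto
  then show ?case using ksc.IH by (simp add: ecomm_sc_left kspan.ksc)
qed

definition lf :: "(mono \<times> 'k) list \<Rightarrow> 'k::comm_ring_1 elt \<Rightarrow> 'k" where
  "lf L f = (\<Sum>x\<leftarrow>L. snd x * f (fst x))"

lemma lf_kspan: "x \<in> kspan S \<Longrightarrow> (\<And>s. s \<in> S \<Longrightarrow> lf L s = 0) \<Longrightarrow> lf L x = 0"
proof (induction rule: kspan.induct)
  case kzero then show ?case by (simp add: lf_def zero_lam)
next
  case (kgen s) then show ?case by simp
next
  case (kadd x y)
  have "lf L (x + y) = lf L x + lf L y"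
    unfolding lf_def by (simp add: distrib_left sum_list_addf)
  then have "lf L (\<lambda>a. x a + y a) = lf L x + lf L y" by (simp add: plus_lam)
  then show ?case using kadd by simp
next
  case (ksc x c)
  have "lf L (sc c x) = c * lf L x"
    unfolding lf_def sc_def by (simp add: sum_list_const_mult[symmetric] algebra_simps)
  then show ?case using ksc by simp
qed

lemma Kpart_kspan:
  fixes c :: "'k::comm_ring_1 elt"
  assumes "c \<in> Kpart p"
  shows "c \<in> kspan (range (kb p))"
proof -
  have cFA: "c \<in> FA p" using assms by (simp add: Kpart_def)
  have eq: "c = (\<Sum>m\<in>supp c. sc (c m) (bv p m))"
  proof
    fix m'
    have "(\<Sum>m\<in>supp c. sc (c m) (bv p m)) m' = (\<Sum>m\<in>supp c. c m * bv p m m')"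
      by (simp add: fsum_apply sc_def)
    also have "\<dots> = (\<Sum>m\<in>supp c. if m = m' then c m else 0)"
      by (rule sum.cong[OF refl]) (auto simp: bv_def basis_el_def supp_def dest: FA_valid[OF cFA])
    also have "\<dots> = c m'" using FA_finite[OF cFA] by (simp add: sum.delta' supp_def)
    finally show "c m' = (\<Sum>m\<in>supp c. sc (c m) (bv p m)) m'" by simp
  qed
  have "(\<Sum>m\<in>supp c. sc (c m) (bv p m)) \<in> kspan (range (kb p))"
  proof (rule kspan_sum[OF FA_finite[OF cFA]])
    fix m assume "m \<in> supp c"
    then have "c m \<noteq> 0" by (simp add: supp_def)
    then obtain e where "m = (e, [])" using assms unfolding Kpart_def by (cases m) auto
    then show "sc (c m) (bv p m) \<in> kspan (range (kb p))"
      by (intro kspan.ksc kspan.kgen) (simp add: kb_def)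
  qed
  then show ?thesis using eq by simp
qed




definition xv :: "nat \<Rightarrow> nat \<Rightarrow> 'k::comm_ring_1 elt" where
  "xv p i = bv p ((0,0,0),[i])"

definition R :: "nat \<Rightarrow> 'k::comm_ring_1 elt" where
  "R p = bv p ((0,0,1),[3]) - bv p ((0,1,0),[2]) - bv p ((1,0,0),[1])"

lemma FA_xv[simp]: "xv p i \<in> FA p" by (simp add: xv_def)
lemma FA_R[simp]: "R p \<in> FA p" by (simp add: R_def)
lemma FA_kb[simp]: "kb p e \<in> FA p" by (simp add: kb_def)

lemmas expand = ecomm_def emult_add_left emult_add_right emult_diff_left emult_diff_right
  emult_bv xv_def R_def kb_def

lemma eq_g: "ecomm p (emult p (kb p (a,b,c)) (ecomm p (R p) (xv p i))) (emult p (kb p (a',b',c')) (xv p j))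
   = (emult p (kb p (a+a',b+b',c+c')) (ecomm p (ecomm p (R p) (xv p i)) (xv p j)) :: 'k::comm_ring_1 elt)"
  by (simp add: expand algebra_simps)


definition gset :: "nat \<Rightarrow> ('i \<Rightarrow> 'k::comm_ring_1 elt) \<Rightarrow> 'i set \<Rightarrow> 'k elt set" where
  "gset p G I = (\<lambda>x. emult p (kb p (fst x)) (G (snd x))) ` (UNIV \<times> I)"

definition S1 :: "nat \<Rightarrow> 'k::comm_ring_1 elt set" where
  "S1 p = gset p (\<lambda>i::nat. R p) {0}"
definition S2 :: "nat \<Rightarrow> 'k::comm_ring_1 elt set" where
  "S2 p = gset p (\<lambda>i. ecomm p (R p) (xv p i)) {1,2,3}"
definition S3a :: "nat \<Rightarrow> 'k::comm_ring_1 elt set" where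
  "S3a p = gset p (\<lambda>ij. ecomm p (ecomm p (R p) (xv p (fst ij))) (xv p (snd ij))) ({1,2,3} \<times> {1,2,3})"
definition S3b :: "nat \<Rightarrow> 'k::comm_ring_1 elt set" where
  "S3b p = gset p (\<lambda>ij. ecomm p (R p) (ecomm p (xv p (fst ij)) (xv p (snd ij)))) ({1,2,3} \<times> {1,2,3})"
definition S3 :: "nat \<Rightarrow> 'k::comm_ring_1 elt set" where
  "S3 p = S3a p \<union> S3b p"
definition F1 :: "nat \<Rightarrow> 'k::comm_ring_1 elt set" where
  "F1 p = gset p (\<lambda>i. xv p i) {1,2,3}"
definition F2 :: "nat \<Rightarrow> 'k::comm_ring_1 elt set" where
  "F2 p = gset p (\<lambda>ij. ecomm p (xv p (fst ij)) (xv p (snd ij))) ({1,2,3} \<times> {1,2,3})"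

lemma gset_FA: "(\<And>i. G i \<in> FA p) \<Longrightarrow> gset p G I \<subseteq> FA p"
  unfolding gset_def by auto

lemma S1_FA: "S1 p \<subseteq> FA p" unfolding S1_def by (rule gset_FA) simp
lemma S2_FA: "S2 p \<subseteq> FA p" unfolding S2_def by (rule gset_FA) simp
lemma S3_FA: "S3 p \<subseteq> FA p" unfolding S3_def S3a_def S3b_def
  by (intro Un_least gset_FA) simp_all
lemma F1_FA: "F1 p \<subseteq> FA p" unfolding F1_def by (rule gset_FA) simp
lemma F2_FA: "F2 p \<subseteq> FA p" unfolding F2_def by (rule gset_FA) simp
lemma K_FA: "range (kb p) \<subseteq> FA p" by auto

lemma gsetI: "i \<in> I \<Longrightarrow> emult p (kb p e) (G i) \<in> gset p G I"
  unfolding gset_def by (rule image_eqI[of _ _ "(e,i)"]) simp_all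
lemma gsetE: "t \<in> gset p G I \<Longrightarrow> (\<And>a b c i. i \<in> I \<Longrightarrow> t = emult p (kb p (a,b,c)) (G i) \<Longrightarrow> thesis) \<Longrightarrow> thesis"
proof -
  assume t: "t \<in> gset p G I" and H: "\<And>a b c i. i \<in> I \<Longrightarrow> t = emult p (kb p (a,b,c)) (G i) \<Longrightarrow> thesis"
  from t obtain x where x: "x \<in> UNIV \<times> I" "t = emult p (kb p (fst x)) (G (snd x))"
    unfolding gset_def by (rule imageE)
  obtain a b c i where "x = ((a,b,c),i)" by (cases x) auto
  with x show thesis by (intro H[of i a b c]) auto
qed

lemma kb_eq: "kb p e = kb p (fst e, fst (snd e), snd (snd e))" by simp

lemma FA_repr:
  fixes f :: "'k::comm_ring_1 elt"
  assumes "f \<in> FA p"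
  shows "f \<in> kspan (range (bv p))"
proof -
  have eq: "f = (\<Sum>m\<in>supp f. sc (f m) (bv p m))"
  proof
    fix m'
    have "(\<Sum>m\<in>supp f. sc (f m) (bv p m)) m' = (\<Sum>m\<in>supp f. f m * bv p m m')"
      by (simp add: fsum_apply sc_def)
    also have "\<dots> = (\<Sum>m\<in>supp f. if m = m' then f m else 0)"
      by (rule sum.cong[OF refl]) (auto simp: bv_def basis_el_def supp_def dest: FA_valid[OF assms])
    also have "\<dots> = f m'" using FA_finite[OF assms] by (simp add: sum.delta' supp_def)
    finally show "f m' = (\<Sum>m\<in>supp f. sc (f m) (bv p m)) m'" by simp
  qed
  have "(\<Sum>m\<in>supp f. sc (f m) (bv p m)) \<in> kspan (range (bv p))"
    by (rule kspan_sum[OF FA_finite[OF assms]]) (auto intro: kspan.ksc kspan.kgen)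
  then show ?thesis using eq by simp
qed

lemma kb_assoc:
  fixes f :: "'k::comm_ring_1 elt"
  assumes "f \<in> FA p"
  shows "emult p (kb p (a,b,c)) (emult p (kb p (a',b',c')) f) = emult p (kb p (a+a',b+b',c+c')) f"
proof -
  have "f \<in> kspan (range (bv p))" by (rule FA_repr[OF assms])
  then show ?thesis
  proof (induction rule: kspan.induct)
    case kzero then show ?case by (simp add: zero_lam)
  next
    case (kgen s)
    then obtain m where m: "s = bv p m" by blast
    obtain e w where "m = (e,w)" by (cases m)
    moreover obtain x y z where "e = (x,y,z)" by (cases e)
    ultimately have "s = bv p ((x,y,z),w)" using m by simp
    then show ?case by (simp add: kb_def emult_bv algebra_simps)
  next
    case (kadd x y)
    have bvFA: "range (bv p) \<subseteq> (FA p :: 'k elt set)" by auto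
    have "x \<in> FA p" "y \<in> FA p" using kadd.hyps kspan_FA[OF _ bvFA] by auto
    then show ?case using kadd.IH by (simp add: emult_add_right plus_lam)
  next
    case (ksc x d)
    have bvFA: "range (bv p) \<subseteq> (FA p :: 'k elt set)" by auto
    have "x \<in> FA p" using ksc.hyps kspan_FA[OF _ bvFA] by auto
    then show ?case using ksc.IH by (simp add: emult_sc_right)
  qed
qed

lemma K_gen:
  fixes S :: "'k::comm_ring_1 elt set"
  assumes "\<And>i. G i \<in> FA p"
    and "s \<in> range (kb p)" "t \<in> gset p G I"
  shows "emult p s t \<in> kspan (gset p G I)"
proof -
  obtain e where s: "s = kb p e" using assms by blast
  obtain a b c where e: "e = (a,b,c)" by (cases e)
  from assms(3) show ?thesis
  proof (rule gsetE)
    fix a' b' c' i assume i: "i \<in> I" and t: "t = emult p (kb p (a', b', c')) (G i)"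
    have "emult p s t = emult p (kb p (a+a',b+b',c+c')) (G i)"
      using s e t kb_assoc[OF assms(1)] by simp
    then show ?thesis using i by (auto intro!: kspan.kgen gsetI)
  qed
qed

lemma K_S1: "s \<in> range (kb p) \<Longrightarrow> t \<in> S1 p \<Longrightarrow> emult p s t \<in> kspan (S1 p :: 'k::comm_ring_1 elt set)"
  unfolding S1_def by (rule K_gen) simp_all
lemma K_S2: "s \<in> range (kb p) \<Longrightarrow> t \<in> S2 p \<Longrightarrow> emult p s t \<in> kspan (S2 p :: 'k::comm_ring_1 elt set)"
  unfolding S2_def by (rule K_gen) simp_all
lemma K_F1: "s \<in> range (kb p) \<Longrightarrow> t \<in> F1 p \<Longrightarrow> emult p s t \<in> kspan (F1 p :: 'k::comm_ring_1 elt set)"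
  unfolding F1_def by (rule K_gen) simp_all
lemma K_F2: "s \<in> range (kb p) \<Longrightarrow> t \<in> F2 p \<Longrightarrow> emult p s t \<in> kspan (F2 p :: 'k::comm_ring_1 elt set)"
  unfolding F2_def by (rule K_gen) simp_all
lemma K_S3: "s \<in> range (kb p) \<Longrightarrow> t \<in> S3 p \<Longrightarrow> emult p s t \<in> kspan (S3 p :: 'k::comm_ring_1 elt set)"
proof -
  assume s: "s \<in> range (kb p)" and t: "t \<in> S3 p"
  then consider "t \<in> S3a p" | "t \<in> S3b p" unfolding S3_def by blast
  then show ?thesis
  proof cases
    case 1
    have "emult p s t \<in> kspan (S3a p)" unfolding S3a_def
      by (rule K_gen) (use s 1 in \<open>simp_all add: S3a_def\<close>)
    then show ?thesis unfolding S3_def by (rule kspan_mono) blast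
  next
    case 2
    have "emult p s t \<in> kspan (S3b p)" unfolding S3b_def
      by (rule K_gen) (use s 2 in \<open>simp_all add: S3b_def\<close>)
    then show ?thesis unfolding S3_def by (rule kspan_mono) blast
  qed
qed




lemma eq_e: "ecomm p (emult p (kb p (a,b,c)) (xv p i)) (emult p (kb p (a',b',c')) (xv p j))
   = (emult p (kb p (a+a',b+b',c+c')) (ecomm p (xv p i) (xv p j)) :: 'k::comm_ring_1 elt)"
  by (simp add: expand algebra_simps)
lemma eq_f: "ecomm p (emult p (kb p (a,b,c)) (R p)) (emult p (kb p (a',b',c')) (xv p j))
   = (emult p (kb p (a+a',b+b',c+c')) (ecomm p (R p) (xv p j)) :: 'k::comm_ring_1 elt)"
  by (simp add: expand algebra_simps)
lemma eq_h: "ecomm p (emult p (kb p (a,b,c)) (R p)) (emult p (kb p (a',b',c')) (ecomm p (xv p i) (xv p j)))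
   = (emult p (kb p (a+a',b+b',c+c')) (ecomm p (R p) (ecomm p (xv p i) (xv p j))) :: 'k::comm_ring_1 elt)"
  by (simp add: expand algebra_simps)

lemma gsetI2: "i \<in> I \<Longrightarrow> j \<in> J \<Longrightarrow> emult p (kb p e) (G (i,j)) \<in> gset p G (I \<times> J)"
  by (rule gsetI) simp

lemma B_F1F1: "s \<in> F1 p \<Longrightarrow> t \<in> F1 p \<Longrightarrow> ecomm p s t \<in> kspan (F2 p :: 'k::comm_ring_1 elt set)"
  unfolding F1_def F2_def
  apply (erule gsetE, erule gsetE)
  apply (simp only: eq_e)
  apply (rule kspan.kgen)
  apply (rule gsetI2[where G="\<lambda>ij. ecomm p (xv p (fst ij)) (xv p (snd ij))", simplified])
  by assumption+

lemma B_S1F1: "s \<in> S1 p \<Longrightarrow> t \<in> F1 p \<Longrightarrow> ecomm p s t \<in> kspan (S2 p :: 'k::comm_ring_1 elt set)"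
  unfolding S1_def F1_def S2_def
  apply (erule gsetE, erule gsetE)
  apply (simp only: eq_f)
  apply (rule kspan.kgen)
  apply (rule gsetI[where G="\<lambda>i. ecomm p (R p) (xv p i)", simplified])
  by assumption+

lemma B_S2F1: "s \<in> S2 p \<Longrightarrow> t \<in> F1 p \<Longrightarrow> ecomm p s t \<in> kspan (S3 p :: 'k::comm_ring_1 elt set)"
  unfolding S2_def F1_def S3_def S3a_def
  apply (erule gsetE, erule gsetE)
  apply (simp only: eq_g)
  apply (rule kspan.kgen)
  apply (rule UnI1)
  apply (rule gsetI2[where G="\<lambda>ij. ecomm p (ecomm p (R p) (xv p (fst ij))) (xv p (snd ij))", simplified])
  by assumption+

lemma B_S1F2: "s \<in> S1 p \<Longrightarrow> t \<in> F2 p \<Longrightarrow> ecomm p s t \<in> kspan (S3 p :: 'k::comm_ring_1 elt set)"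
  unfolding S1_def F2_def S3_def S3b_def
  apply (erule gsetE, erule gsetE)
  apply (clarify)
  apply (simp only: eq_h prod.sel)
  apply (rule kspan.kgen)
  apply (rule UnI2)
  apply (rule gsetI2[where G="\<lambda>ij. ecomm p (R p) (ecomm p (xv p (fst ij)) (xv p (snd ij)))", simplified])
  by assumption+




lemma Ln_emult_low:
  fixes f g :: "'k::comm_ring_1 elt"
  assumes "f \<in> FA p" "g \<in> FA p" "Ln 0 f = 0" "Ln 0 g = 0"
  shows "Ln 0 (emult p f g) = 0" "Ln (Suc 0) (emult p f g) = 0"
    "Ln 2 (emult p f g) = emult p (Ln (Suc 0) f) (Ln (Suc 0) g)"
    "Ln 3 (emult p f g) = emult p (Ln (Suc 0) f) (Ln 2 g) + emult p (Ln 2 f) (Ln (Suc 0) g)"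
  using assms by (simp_all add: Ln_emult[OF assms(1,2)] eval_nat_numeral atMost_Suc)

lemma Ln_ecomm_low:
  fixes f g :: "'k::comm_ring_1 elt"
  assumes "f \<in> FA p" "g \<in> FA p" "Ln 0 f = 0" "Ln 0 g = 0"
  shows "Ln 0 (ecomm p f g) = 0" "Ln (Suc 0) (ecomm p f g) = 0"
    "Ln 2 (ecomm p f g) = ecomm p (Ln (Suc 0) f) (Ln (Suc 0) g)"
    "Ln 3 (ecomm p f g) = ecomm p (Ln (Suc 0) f) (Ln 2 g) + ecomm p (Ln 2 f) (Ln (Suc 0) g)"
  using Ln_emult_low[OF assms] Ln_emult_low[OF assms(2,1,4,3)]
  by (simp_all add: ecomm_def algebra_simps)

lemma Kpart_Ln:
  fixes c :: "'k::comm_ring_1 elt"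
  assumes "c \<in> Kpart p"
  shows "Ln i c = (if i = 0 then c else 0)"
proof (rule ext)
  fix m :: mono
  obtain e w where m: "m = (e,w)" by (cases m)
  have "c (e,w) \<noteq> 0 \<Longrightarrow> w = []" using assms unfolding Kpart_def by blast
  then show "Ln i c m = (if i = 0 then c else 0) m"
    unfolding Ln_def m by auto
qed

lemma Ln_Kmult:
  fixes c h :: "'k::comm_ring_1 elt"
  assumes "c \<in> Kpart p" "h \<in> FA p"
  shows "Ln n (emult p c h) = emult p c (Ln n h)"
proof -
  have cFA: "c \<in> FA p" using assms by (simp add: Kpart_def)
  have "Ln n (emult p c h) = (\<Sum>i\<le>n. emult p (Ln i c) (Ln (n - i) h))"
    by (rule Ln_emult[OF cFA assms(2)])
  also have "\<dots> = (\<Sum>i\<le>n. if i = 0 then emult p c (Ln n h) else 0)"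
    by (rule sum.cong[OF refl]) (simp add: Kpart_Ln[OF assms(1)])
  also have "\<dots> = emult p c (Ln n h)" by (simp add: sum.delta)
  finally show ?thesis .
qed

definition FLinv :: "nat \<Rightarrow> 'k::comm_ring_1 elt \<Rightarrow> bool" where
  "FLinv p h \<longleftrightarrow> h \<in> FA p \<and> Ln 0 h = 0 \<and> Ln (Suc 0) h \<in> kspan (F1 p) \<and> Ln 2 h \<in> kspan (F2 p)"

definition LIinv :: "nat \<Rightarrow> 'k::comm_ring_1 elt \<Rightarrow> bool" where
  "LIinv p g \<longleftrightarrow> g \<in> FA p \<and> Ln 0 g = 0 \<and> Ln (Suc 0) g \<in> kspan (S1 p) \<and> Ln 2 g \<in> kspan (S2 p)
      \<and> Ln 3 g \<in> kspan (S3 p)"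

lemma Kmult_span:
  fixes c t :: "'k::comm_ring_1 elt"
  assumes "c \<in> Kpart p" "t \<in> kspan S" "S \<subseteq> FA p"
    and K: "\<And>s t. s \<in> range (kb p) \<Longrightarrow> t \<in> S \<Longrightarrow> emult p s t \<in> kspan S"
  shows "emult p c t \<in> kspan S"
  by (rule kspan_emult[OF K_FA assms(3) K Kpart_kspan[OF assms(1)] assms(2)])

lemma xg_eq: "p \<ge> 1 \<Longrightarrow> i \<in> {1,2,3} \<Longrightarrow> (xg i :: 'k::comm_ring_1 elt) = xv p i"
  by (auto simp: xg_def xv_def bv_def valid_mono_def)

lemma xv_F1: "i \<in> {1,2,3} \<Longrightarrow> p \<ge> 1 \<Longrightarrow> (xv p i :: 'k::comm_ring_1 elt) \<in> kspan (F1 p)"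
proof -
  assume i: "i \<in> {1,2,3}" and p: "p \<ge> 1"
  have "(xv p i :: 'k elt) = emult p (kb p (0,0,0)) (xv p i)"
    by (simp add: kb_def xv_def emult_bv)
  also have "\<dots> \<in> F1 p" unfolding F1_def by (rule gsetI[OF i])
  finally show ?thesis by (rule kspan.kgen)
qed

lemma FreeLie_inv:
  assumes "p \<ge> 1" "h \<in> FreeLie p"
  shows "FLinv p (h :: 'k::comm_ring_1 elt)"
  using assms(2)
proof (induction rule: FreeLie.induct)
  case (gen i)
  then show ?case using assms(1) xv_F1[OF gen assms(1)]
    by (simp add: FLinv_def xg_eq xv_def kspan.kzero)
next
  case zero
  then show ?case by (simp add: FLinv_def kspan.kzero zero_lam)
next
  case (add f g)
  then show ?case by (simp add: FLinv_def plus_lam kspan.kadd)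
next
  case (smult c f)
  have cFA: "c \<in> FA p" using smult by (simp add: Kpart_def)
  from smult show ?case
    by (simp add: FLinv_def Ln_Kmult Kmult_span[OF _ _ F1_FA K_F1] Kmult_span[OF _ _ F2_FA K_F2] cFA)
next
  case (bracket f g)
  then have H: "f \<in> FA p" "g \<in> FA p" "Ln 0 f = 0" "Ln 0 g = 0" by (simp_all add: FLinv_def)
  from bracket show ?case
    by (simp add: FLinv_def Ln_ecomm_low[OF H] kspan.kzero kspan_ecomm[OF F1_FA F1_FA B_F1F1])
qed

lemma R_S1: "(R p :: 'k::comm_ring_1 elt) \<in> kspan (S1 p)"
proof -
  have "(R p :: 'k elt) = emult p (kb p (0,0,0)) (R p)"
    by (simp add: kb_def R_def emult_bv emult_diff_right)
  also have "\<dots> \<in> S1 p" unfolding S1_def by (rule gsetI) simp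
  finally show ?thesis by (rule kspan.kgen)
qed

lemma minus_lam: "(\<lambda>a. f a - g a) = (f - g::'k::comm_ring_1 elt)" by (simp add: fun_diff_def)

lemma LIinv_R: "LIinv p (R p :: 'k::comm_ring_1 elt)"
  using R_S1 by (simp add: LIinv_def R_def kspan.kzero)

lemma rel_eq: "p \<ge> 2 \<Longrightarrow> (rel :: 'k::comm_ring_1 elt) = R p"
  by (simp add: rel_def R_def bv_def valid_mono_def)

lemma LieIdeal_inv:
  assumes "p \<ge> 2" "g \<in> LieIdeal p"
  shows "LIinv p (g :: 'k::comm_ring_1 elt)"
  using assms(2)
proof (induction rule: LieIdeal.induct)
  case gen
  show ?case using assms(1) LIinv_R rel_eq by metis
next
  case zero
  then show ?case by (simp add: LIinv_def kspan.kzero zero_lam)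
next
  case (add f g)
  then show ?case by (simp add: LIinv_def plus_lam kspan.kadd)
next
  case (smult c f)
  have cFA: "c \<in> FA p" using smult by (simp add: Kpart_def)
  from smult show ?case
    by (simp add: LIinv_def Ln_Kmult Kmult_span[OF _ _ S1_FA K_S1] Kmult_span[OF _ _ S2_FA K_S2]
        Kmult_span[OF _ _ S3_FA K_S3] cFA)
next
  case (bracket f g)
  have FL: "FLinv p g" using FreeLie_inv[OF _ bracket(2)] assms(1) by simp
  then have H: "f \<in> FA p" "g \<in> FA p" "Ln 0 f = 0" "Ln 0 g = 0" using bracket.IH by (simp_all add: FLinv_def LIinv_def)
  from bracket.IH FL show ?case
    by (simp add: LIinv_def FLinv_def Ln_ecomm_low[OF H] kspan.kzero
        kspan_ecomm[OF S1_FA F1_FA B_S1F1] kspan.kadd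
        kspan_ecomm[OF S1_FA F2_FA B_S1F2] kspan_ecomm[OF S2_FA F1_FA B_S2F1])
qed




lemma AI_FA: "f \<in> AssocIdeal p \<Longrightarrow> p \<ge> 2 \<Longrightarrow> (f::'k::comm_ring_1 elt) \<in> FA p"
  by (induction rule: AssocIdeal.induct) (auto simp: rel_eq zero_lam plus_lam)

lemma AI_uminus:
  assumes "f \<in> AssocIdeal p" "p \<ge> 2"
  shows "- (f::'k::comm_ring_1 elt) \<in> AssocIdeal p"
proof -
  have fFA: "f \<in> FA p" using AI_FA assms by blast
  have "emult p (- kb p (0,0,0)) f \<in> AssocIdeal p"
    by (rule AssocIdeal.lmult) (simp_all add: assms(1))
  moreover have "emult p (- kb p (0,0,0)) f = - f"
    using fFA assms(2) by (simp add: emult_uminus_left emult_kb0)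
  ultimately show ?thesis by simp
qed

lemma AI_diff:
  "f \<in> AssocIdeal p \<Longrightarrow> g \<in> AssocIdeal p \<Longrightarrow> p \<ge> 2 \<Longrightarrow> f - (g::'k::comm_ring_1 elt) \<in> AssocIdeal p"
  using AssocIdeal.add[of f p "-g"] AI_uminus[of g p] by simp

lemma kb_Kpart: "(kb p e :: 'k::comm_ring_1 elt) \<in> Kpart p"
  unfolding Kpart_def using FA_kb[of p e] by (auto simp: kb_def bv_def basis_el_def)

lemma bv_eval: "bv p m m' = (if valid_mono p m \<and> m' = m then 1 else 0)"
  by (simp add: bv_def basis_el_def)

lemma lf_cons: "lf ((m,c) # L) f = c * f m + lf L f"
  by (simp add: lf_def)
lemma lf_nil: "lf [] f = 0"
  by (simp add: lf_def)

lemma char_zero_eq: "CHAR('k::field) = p \<Longrightarrow> (of_nat p :: 'k) = 0"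
  by (metis of_nat_CHAR)

definition W2 :: "'k::comm_ring_1 elt" where
  "W2 = emult 2 (kb 2 (1,1,0)) (ecomm 2 (xg 1) (xg 2))"

lemma W2_FreeLie: "W2 \<in> FreeLie 2"
  unfolding W2_def
  by (intro FreeLie.smult kb_Kpart FreeLie.bracket FreeLie.gen) simp_all

definition L2 :: "(mono \<times> 'k::comm_ring_1) list" where
  "L2 = [(((1,1,0),[1,2]),1), (((1,0,1),[1,3]),1), (((0,1,1),[2,3]),1)]"

lemma lf_S2: "(2::'k) = 0 \<Longrightarrow> s \<in> S2 2 \<Longrightarrow> lf L2 (s::'k::comm_ring_1 elt) = 0"
  unfolding S2_def
  apply (erule gsetE)
  apply (elim insertE emptyE)
  by (simp_all add: expand L2_def lf_cons lf_nil bv_eval valid_mono_def eq_commute[of 0 2])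


lemma W2_expand: "(W2 :: 'k::comm_ring_1 elt) = bv 2 ((1,1,0),[1,2]) - bv 2 ((1,1,0),[2,1])"
proof -
  have "(xg 1 :: 'k elt) = xv 2 1" "(xg 2 :: 'k elt) = xv 2 2" by (simp_all add: xg_eq)
  then show ?thesis unfolding W2_def by (simp add: expand)
qed

lemma W2_not_LI:
  assumes c2: "(2::'k::comm_ring_1) = 0"
  shows "(W2 :: 'k elt) \<notin> LieIdeal 2"
proof
  assume "(W2 :: 'k elt) \<in> LieIdeal 2"
  then have "LIinv 2 (W2 :: 'k elt)" by (rule LieIdeal_inv[rotated]) simp
  then have "Ln 2 (W2 :: 'k elt) \<in> kspan (S2 2)" by (simp add: LIinv_def)
  then have "lf L2 (Ln 2 (W2 :: 'k elt)) = 0" by (rule lf_kspan) (rule lf_S2[OF c2])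
  moreover have "lf L2 (Ln 2 (W2 :: 'k elt)) = 1"
    by (simp add: W2_expand L2_def lf_cons lf_nil bv_eval valid_mono_def)
  ultimately show False by simp
qed

lemma W2_AI:
  assumes c2: "(2::'k::comm_ring_1) = 0"
  shows "(W2 :: 'k elt) \<in> AssocIdeal 2"
proof -
  define a :: "'k elt" where "a = bv 2 ((1,0,0),[1]) + bv 2 ((0,1,0),[2])"
  define T :: "'k elt" where "T = bv 2 ((0,0,1),[3])"
  have aFA: "a \<in> FA 2" and TFA: "T \<in> FA 2" by (simp_all add: a_def T_def)
  have relFA: "(rel :: 'k elt) \<in> FA 2" by (simp add: rel_eq[of 2])
  have a_eq: "a = T - rel" by (simp add: a_def T_def rel_eq[of 2] R_def)
  have TT: "emult 2 T T = 0" unfolding T_def emult_bv by (simp add: bv_def valid_mono_def)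
  have "emult 2 a a = emult 2 T a - emult 2 rel a"
    by (subst (1) a_eq) (simp add: emult_diff_left aFA TFA relFA)
  also have "emult 2 T a = - emult 2 T rel"
    by (subst a_eq) (simp add: emult_diff_right aFA TFA relFA TT)
  finally have aa: "emult 2 a a = - emult 2 T rel - emult 2 rel a" .
  have W: "W2 = emult 2 a a"
  proof
    fix m :: mono
    show "W2 m = emult 2 a a m"
      using c2 by (simp add: W2_expand a_def expand bv_eval valid_mono_def eq_commute[of 0 2]
          del: One_nat_def)
  qed
  have "- emult 2 T rel - emult 2 rel a \<in> AssocIdeal 2"
    by (intro AI_diff AI_uminus AssocIdeal.lmult AssocIdeal.rmult AssocIdeal.gen TFA aFA) simp_all
  then show ?thesis using W aa by simp
qed


definition W3 :: "'k::comm_ring_1 elt" where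
  "W3 = emult 3 (kb 3 (2,1,0)) (ecomm 3 (xg 1) (ecomm 3 (xg 1) (xg 2)))
      + emult 3 (kb 3 (1,2,0)) (ecomm 3 (xg 2) (ecomm 3 (xg 2) (xg 1)))"

lemma W3_FreeLie: "W3 \<in> FreeLie 3"
  unfolding W3_def
  by (intro FreeLie.add FreeLie.smult kb_Kpart FreeLie.bracket FreeLie.gen) simp_all

definition L3 :: "(mono \<times> 'k::comm_ring_1) list" where
  "L3 = [(((2,1,0),[1,1,2]),1), (((2,0,1),[1,1,3]),1), (((1,2,0),[1,2,2]),1),
         (((1,1,1),[1,3,2]),1), (((0,2,1),[2,2,3]),1)]"

lemma num_sc: "numeral n * (f::'k::comm_ring_1 elt) = sc (numeral n) f"
  by (rule ext) (simp add: sc_def)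
lemma FA_num[simp]: "f \<in> FA p \<Longrightarrow> numeral n * (f::'k::comm_ring_1 elt) \<in> FA p"
  by (simp add: num_sc)
lemma emult_num_right: "f \<in> FA p \<Longrightarrow> h \<in> FA p \<Longrightarrow> emult p h (numeral n * f) = numeral n * emult p h (f::'k::comm_ring_1 elt)"
  by (simp add: num_sc emult_sc_right)
lemma emult_num_left: "f \<in> FA p \<Longrightarrow> h \<in> FA p \<Longrightarrow> emult p (numeral n * f) h = numeral n * emult p (f::'k::comm_ring_1 elt) h"
  by (simp add: num_sc emult_sc_left)

lemma Ln_num[simp]: "Ln k (numeral n * (f::'k::comm_ring_1 elt)) = numeral n * Ln k f"
  by (simp add: num_sc)

lemmas expand2 = expand emult_uminus_left emult_uminus_right emult_num_left emult_num_right

lemma lf_S3a: "(3::'k) = 0 \<Longrightarrow> s \<in> S3a 3 \<Longrightarrow> lf L3 (s::'k::comm_ring_1 elt) = 0"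
  unfolding S3a_def
  apply (erule gsetE)
  apply (elim SigmaE insertE emptyE)
  by (simp_all add: expand2 L3_def lf_cons lf_nil bv_eval valid_mono_def eq_commute[of 0 3])

lemma lf_S3b: "(3::'k) = 0 \<Longrightarrow> s \<in> S3b 3 \<Longrightarrow> lf L3 (s::'k::comm_ring_1 elt) = 0"
  unfolding S3b_def
  apply (erule gsetE)
  apply (elim SigmaE insertE emptyE)
  by (simp_all add: expand2 L3_def lf_cons lf_nil bv_eval valid_mono_def eq_commute[of 0 3])


lemma lf_S3: "(3::'k) = 0 \<Longrightarrow> s \<in> S3 3 \<Longrightarrow> lf L3 (s::'k::comm_ring_1 elt) = 0"
  unfolding S3_def using lf_S3a lf_S3b by blast

lemma W3_not_LI:
  assumes c3: "(3::'k::comm_ring_1) = 0" and c2: "(2::'k) \<noteq> 0"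
  shows "(W3 :: 'k elt) \<notin> LieIdeal 3"
proof
  assume "(W3 :: 'k elt) \<in> LieIdeal 3"
  then have "LIinv 3 (W3 :: 'k elt)" by (rule LieIdeal_inv[rotated]) simp
  then have "Ln 3 (W3 :: 'k elt) \<in> kspan (S3 3)" by (simp add: LIinv_def)
  then have "lf L3 (Ln 3 (W3 :: 'k elt)) = 0" by (rule lf_kspan) (rule lf_S3[OF c3])
  moreover have "lf L3 (Ln 3 (W3 :: 'k elt)) = 2"
  proof -
    have "(xg 1 :: 'k elt) = xv 3 1" "(xg 2 :: 'k elt) = xv 3 2" by (simp_all add: xg_eq)
    then show ?thesis
      by (simp add: W3_def expand2 L3_def lf_cons lf_nil bv_eval valid_mono_def)
  qed
  ultimately show False using c2 by simp
qed

lemma W3_AI: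
  assumes c3: "(3::'k::comm_ring_1) = 0"
  shows "(W3 :: 'k elt) \<in> AssocIdeal 3"
proof -
  define a :: "'k elt" where "a = bv 3 ((1,0,0),[1]) + bv 3 ((0,1,0),[2])"
  define T :: "'k elt" where "T = bv 3 ((0,0,1),[3])"
  have aFA: "a \<in> FA 3" and TFA: "T \<in> FA 3" by (simp_all add: a_def T_def)
  have relFA: "(rel :: 'k elt) \<in> FA 3" by (simp add: rel_eq[of 3])
  have a_eq: "a = T - rel" by (simp add: a_def T_def rel_eq[of 3] R_def)
  have TTT: "emult 3 T (emult 3 T T) = 0" unfolding T_def emult_bv by (simp add: bv_def valid_mono_def)
  have Ta: "emult 3 T a = emult 3 T T - emult 3 T rel"
    by (subst a_eq) (simp add: emult_diff_right aFA TFA relFA)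
  have Taa: "emult 3 T (emult 3 a a) = emult 3 T (emult 3 T a) - emult 3 T (emult 3 rel a)"
    by (subst (1) a_eq) (simp add: emult_diff_right emult_diff_left aFA TFA relFA)
  have "emult 3 a (emult 3 a a) = emult 3 T (emult 3 a a) - emult 3 rel (emult 3 a a)"
    by (subst (1) a_eq) (simp add: emult_diff_left aFA TFA relFA)
  also have "\<dots> = - emult 3 T (emult 3 T rel) - emult 3 T (emult 3 rel a) - emult 3 rel (emult 3 a a)"
    by (simp add: Taa Ta emult_diff_right TTT TFA relFA)
  finally have aaa: "emult 3 a (emult 3 a a) =
     - emult 3 T (emult 3 T rel) - emult 3 T (emult 3 rel a) - emult 3 rel (emult 3 a a)" .
  have W: "W3 = emult 3 a (emult 3 a a)"
  proof
    fix m :: mono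
    have "(xg 1 :: 'k elt) = xv 3 1" "(xg 2 :: 'k elt) = xv 3 2" by (simp_all add: xg_eq)
    then show "W3 m = emult 3 a (emult 3 a a) m"
      using c3 by (simp add: W3_def a_def expand2 bv_eval valid_mono_def eq_commute[of 0 3])
  qed
  have "- emult 3 T (emult 3 T rel) - emult 3 T (emult 3 rel a) - emult 3 rel (emult 3 a a) \<in> AssocIdeal 3"
    by (intro AI_diff AI_uminus AssocIdeal.lmult AssocIdeal.rmult AssocIdeal.gen TFA aFA FA_emult) simp_all
  then show ?thesis using W aaa by simp
qed



theorem mainTheorem12:
  assumes "p \<in> {2, 3}"
    and "CHAR('k::field) = p"
  shows "\<not> canonical_map_injective p TYPE('k)"
proof -
  have cp: "(of_nat p :: 'k) = 0" using assms(2) by (metis of_nat_CHAR)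
  from assms(1) consider "p = 2" | "p = 3" by blast
  then show ?thesis
  proof cases
    case 1
    have c2: "(2::'k) = 0" using cp 1 by simp
    have "(W2 :: 'k elt) \<in> FreeLie p" "(W2 :: 'k elt) \<in> AssocIdeal p" "(W2 :: 'k elt) \<notin> LieIdeal p"
      using W2_FreeLie W2_AI[OF c2] W2_not_LI[OF c2] 1 by simp_all
    then show ?thesis unfolding canonical_map_injective_def by blast
  next
    case 2
    have c3: "(3::'k) = 0" using cp 2 by simp
    have c2: "(2::'k) \<noteq> 0"
    proof
      assume h: "(2::'k) = 0"
      have "(3::'k) = 2 + 1" by simp
      then have "(1::'k) = 0" using h c3 by simp
      then show False by simp
    qed
    have "(W3 :: 'k elt) \<in> FreeLie p" "(W3 :: 'k elt) \<in> AssocIdeal p" "(W3 :: 'k elt) \<notin> LieIdeal p"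
      using W3_FreeLie W3_AI[OF c3] W3_not_LI[OF c3 c2] 2 by simp_all
    then show ?thesis unfolding canonical_map_injective_def by blast
  qed
qed

end
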